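(* Let $N_0\in\mathbb{N}$ be a constant such that, for some $C'>0$, $\frac{R^2}{w(B(x,R))}\pi(B(x,R))\le C'(R/\rho_w(x,\mu))^{N_0}$ for all $x\in\mathbb{R}^d$ and $R\ge\rho_w(x,\mu)$. Let $c>0$, $x\in\mathbb{R}^d$, $t>0$, and write $w(B(x\wedge y,\sqrt t))=\min\{w(B(x,\sqrt t)),w(B(y,\sqrt t))\}$. (a) If $\sqrt t\le a\rho_w(x,\mu)$ for some $a>0$, then there is $C=C(a)>0$ such that \[\int_{\mathbb{R}^d}\frac{1}{w(B(x\wedge y,\sqrt t))}\exp\Big(-\frac{|x-y|^2}{ct}\Big)d\pi(y)\le\frac Ct\Big(\frac{\sqrt t}{\rho_w(x,\mu)}\Big)^\delta.\] (b) If $\sqrt t\ge a\rho_w(x,\mu)$ for some $a>0$, then there is $C=C(a)>0$ such that \[\int_{\mathbb{R}^d}\frac{1}{w(B(x\wedge y,\sqrt t))}\exp\Big(-\frac{|x-y|^2}{ct}\Big)d\pi(y)\le\frac Ct\Big(\frac{\sqrt t}{\rho_w(x,\mu)}\Big)^{N_0}.\]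
   Context: Setting: $d\ge3$; $w\in A_2$ is a weight on $\mathbb{R}^d$, $w(E)=\int_Ew\,dx$, and there exist $\beta>2$, $C>0$ with $w(B(x,tr))\ge Ct^\beta w(B(x,r))$ for all $x$, $r>0$, $t>1$. $\mu$ is a positive Radon measure, $d\pi=w\,d\mu$, with constants $C_0,\delta,C_1>0$ such that (M1) $\frac{r^2}{w(B(x,r))}\pi(B(x,r))\le C_0 (r/R)^\delta \frac{R^2}{w(B(x,R))}\pi(B(x,R))$ for all $x$, $0<r<R$; (M2) $\pi(B(x,2r))\le C_1(\pi(B(x,r))+w(B(x,r))/r^2)$ for all $x$, $r>0$. The critical function is $\rho_w(x,\mu)=\sup\{r>0:\frac{r^2}{w(B(x,r))}\pi(B(x,r))\le C_1\}$. Such an $N_0$ exists. *)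

theory Defs
  imports "HOL-Analysis.Analysis"
begin

definition wmeas :: "('a::euclidean_space \<Rightarrow> real) \<Rightarrow> 'a set \<Rightarrow> real" where
  "wmeas w E = enn2real (\<integral>\<^sup>+ x\<in>E. ennreal (w x) \<partial>lborel)"

definition A2_weight :: "('a::euclidean_space \<Rightarrow> real) \<Rightarrow> bool" where
  "A2_weight w \<longleftrightarrow> w \<in> borel_measurable borel \<and> (\<forall>x. 0 \<le> w x) \<and>
     (\<forall>K. compact K \<longrightarrow> (\<integral>\<^sup>+ x\<in>K. ennreal (w x) \<partial>lborel) < \<infinity>) \<and>
     (\<exists>A::real. \<forall>x r. 0 < r \<longrightarrow>
        (\<integral>\<^sup>+ y\<in>ball x r. ennreal (w y) \<partial>lborel) *
        (\<integral>\<^sup>+ y\<in>ball x r. inverse (ennreal (w y)) \<partial>lborel)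
          \<le> ennreal A * (emeasure lborel (ball x r))\<^sup>2)"

definition radon_measure :: "'a::euclidean_space measure \<Rightarrow> bool" where
  "radon_measure M \<longleftrightarrow> sets M = sets borel \<and> (\<forall>K. compact K \<longrightarrow> emeasure M K < \<infinity>)"

definition crit_set :: "('a::euclidean_space \<Rightarrow> real) \<Rightarrow> 'a measure \<Rightarrow> real \<Rightarrow> 'a \<Rightarrow> real set" where
  "crit_set w M C1 x = {r. 0 < r \<and>
     ennreal (r\<^sup>2 / wmeas w (ball x r)) * emeasure (density M (\<lambda>y. ennreal (w y))) (ball x r)
       \<le> ennreal C1}"

definition rho_w :: "('a::euclidean_space \<Rightarrow> real) \<Rightarrow> 'a measure \<Rightarrow> real \<Rightarrow> 'a \<Rightarrow> real" where
  "rho_w w M C1 x = Sup (crit_set w M C1 x)"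

end

theory Submission
  imports Defs
begin

lemma IW_fin:
  assumes "A2_weight w"
  shows "(\<integral>\<^sup>+ x\<in>ball c r. ennreal (w x) \<partial>lborel) < \<infinity>"
proof -
  have "(\<integral>\<^sup>+ x\<in>ball c r. ennreal (w x) \<partial>lborel) \<le> (\<integral>\<^sup>+ x\<in>cball c r. ennreal (w x) \<partial>lborel)"
    by (intro nn_integral_mono) (auto split: split_indicator)
  also have "\<dots> < \<infinity>" using assms unfolding A2_weight_def by auto
  finally show ?thesis .
qed

lemma Wm_eq:
  assumes "A2_weight w"
  shows "ennreal (wmeas w (ball c r)) = (\<integral>\<^sup>+ x\<in>ball c r. ennreal (w x) \<partial>lborel)"
  unfolding wmeas_def using IW_fin[OF assms] by (simp add: less_top)

lemma Wm_nonneg: "0 \<le> wmeas w S"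
  unfolding wmeas_def by simp

lemma Wm_mono:
  assumes "A2_weight w" "ball x r \<subseteq> ball y R"
  shows "wmeas w (ball x r) \<le> wmeas w (ball y R)"
proof -
  have "(\<integral>\<^sup>+ z\<in>ball x r. ennreal (w z) \<partial>lborel) \<le> (\<integral>\<^sup>+ z\<in>ball y R. ennreal (w z) \<partial>lborel)"
    using assms(2) by (intro nn_integral_mono) (auto split: split_indicator)
  then show ?thesis unfolding wmeas_def
    using IW_fin[OF assms(1)] by (intro enn2real_mono) auto
qed

lemma lborel_ball: "emeasure lborel (ball (c::'a::euclidean_space) r) = ennreal (r ^ DIM('a) * measure lborel (ball (0::'a) 1))"
  if "r \<ge> 0"
  using emeasure_lborel_ball_finite[of c r] content_ball_conv_unit_ball[OF that, of c]
  by (simp add: emeasure_eq_ennreal_measure less_top)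

lemma ennreal_sqrt_sq: "0 \<le> a \<Longrightarrow> (ennreal (sqrt a))\<^sup>2 = ennreal a"
  by (subst ennreal_power) auto

lemma CS_part:
  fixes w :: "'a::euclidean_space \<Rightarrow> real"
  assumes wA2: "A2_weight w" and E: "E \<in> sets lborel"
    and fin: "(\<integral>\<^sup>+ y\<in>E. inverse (ennreal (w y)) \<partial>lborel) < \<infinity>"
  shows "(emeasure lborel E)\<^sup>2 \<le> (\<integral>\<^sup>+ y\<in>E. ennreal (w y) \<partial>lborel) * (\<integral>\<^sup>+ y\<in>E. inverse (ennreal (w y)) \<partial>lborel)"
proof -
  have wm[measurable]: "w \<in> borel_measurable borel" using wA2 unfolding A2_weight_def by auto
  have w0: "\<And>x. 0 \<le> w x" using wA2 unfolding A2_weight_def by auto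
  define f where "f x = ennreal (sqrt (w x)) * indicator E x" for x
  define g where "g x = inverse (ennreal (sqrt (w x))) * indicator E x" for x
  have fm[measurable]: "f \<in> borel_measurable lborel" unfolding f_def using E by measurable
  have gm[measurable]: "g \<in> borel_measurable lborel" unfolding g_def using E by measurable
  have "AE x in lborel. inverse (ennreal (w x)) * indicator E x \<noteq> \<infinity>"
    using fin E by (intro nn_integral_PInf_AE) auto
  then have AEpos: "AE x in lborel. x \<in> E \<longrightarrow> w x > 0"
    by eventually_elim (use w0 in \<open>force simp: order.order_iff_strict\<close>)
  have "(\<integral>\<^sup>+x. f x * g x \<partial>lborel) = emeasure lborel E"
  proof -
    have "(\<integral>\<^sup>+x. f x * g x \<partial>lborel) = (\<integral>\<^sup>+x. indicator E x \<partial>lborel)"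
    proof (rule nn_integral_cong_AE)
      show "AE x in lborel. f x * g x = indicator E x"
        using AEpos
      proof eventually_elim
        case (elim x)
        show ?case
        proof (cases "x \<in> E")
          case True
          then have "w x > 0" using elim by auto
          then have "ennreal (sqrt (w x)) * inverse (ennreal (sqrt (w x))) = 1"
            by (simp add: inverse_ennreal ennreal_mult[symmetric])
          then show ?thesis using True by (simp add: f_def g_def)
        qed (simp add: f_def g_def)
      qed
    qed
    then show ?thesis using E by simp
  qed
  moreover have "(\<integral>\<^sup>+x. f x ^ 2 \<partial>lborel) = (\<integral>\<^sup>+ y\<in>E. ennreal (w y) \<partial>lborel)"
    by (intro nn_integral_cong) (auto simp: f_def w0 ennreal_sqrt_sq split: split_indicator)
  moreover have "(\<integral>\<^sup>+x. g x ^ 2 \<partial>lborel) = (\<integral>\<^sup>+ y\<in>E. inverse (ennreal (w y)) \<partial>lborel)"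
    by (intro nn_integral_cong) (auto simp: g_def w0 ennreal_inverse_power[symmetric] ennreal_sqrt_sq split: split_indicator)
  ultimately show ?thesis
    using Cauchy_Schwarz_nn_integral[OF fm gm] by simp
qed

lemma Wm_doubling:
  fixes w :: "'a::euclidean_space \<Rightarrow> real"
  assumes wA2: "A2_weight w"
  shows "\<exists>K\<ge>1. \<forall>y r R. 0 < r \<longrightarrow> r \<le> R \<longrightarrow>
     wmeas w (ball y R) \<le> K * (R / r) ^ (2 * DIM('a)) * wmeas w (ball y r)"
proof -
  obtain A where A: "\<And>x r. 0 < r \<Longrightarrow>
        (\<integral>\<^sup>+ y\<in>ball x r. ennreal (w y) \<partial>lborel) *
        (\<integral>\<^sup>+ y\<in>ball x r. inverse (ennreal (w y)) \<partial>lborel)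
          \<le> ennreal A * (emeasure lborel (ball x r))\<^sup>2"
    using wA2 unfolding A2_weight_def by blast
  have wm[measurable]: "w \<in> borel_measurable borel" using wA2 unfolding A2_weight_def by auto
  define K where "K = max A 1"
  define n where "n = DIM('a)"
  define m where "m = measure lborel (ball (0::'a) 1)"
  have m: "m > 0" unfolding m_def using content_ball_pos[of 1 "0::'a"] by simp
  have "wmeas w (ball y R) \<le> K * (R / r) ^ (2 * n) * wmeas w (ball y r)"
    if r: "0 < r" "r \<le> R" for y r R
  proof -
    define E where "E = ball y r"
    define B where "B = ball y R"
    define WE where "WE = wmeas w E"
    define WB where "WB = wmeas w B"
    have WE0: "WE \<ge> 0" "WB \<ge> 0" unfolding WE_def WB_def by (auto simp: Wm_nonneg)
    have IWE: "(\<integral>\<^sup>+ y\<in>E. ennreal (w y) \<partial>lborel) = ennreal WE"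
      unfolding WE_def E_def using Wm_eq[OF wA2] by simp
    have IWB: "(\<integral>\<^sup>+ y\<in>B. ennreal (w y) \<partial>lborel) = ennreal WB"
      unfolding WB_def B_def using Wm_eq[OF wA2] by simp
    have mE: "emeasure lborel E = ennreal (r ^ n * m)"
      unfolding E_def n_def m_def using r by (simp add: lborel_ball)
    have mB: "emeasure lborel B = ennreal (R ^ n * m)"
      unfolding B_def n_def m_def using r by (simp add: lborel_ball)
    have AB: "ennreal WB * (\<integral>\<^sup>+ y\<in>B. inverse (ennreal (w y)) \<partial>lborel) \<le> ennreal (max A 0 * (R ^ n * m)\<^sup>2)"
    proof -
      have "ennreal A * (emeasure lborel B)\<^sup>2 = ennreal (max A 0 * (R ^ n * m)\<^sup>2)"
      proof -
        have e1: "ennreal A = ennreal (max A 0)" by (cases "A \<ge> 0") (auto simp: ennreal_neg)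
        have e2: "(emeasure lborel B)\<^sup>2 = ennreal ((R ^ n * m)\<^sup>2)" using mB m r by (simp add: ennreal_power)
        show ?thesis unfolding e1 e2 by (rule ennreal_mult[symmetric]) auto
      qed
      moreover have "(\<integral>\<^sup>+ y\<in>B. ennreal (w y) \<partial>lborel) * (\<integral>\<^sup>+ y\<in>B. inverse (ennreal (w y)) \<partial>lborel) \<le> ennreal A * (emeasure lborel B)\<^sup>2"
        unfolding B_def using A[of R y] r by simp
      ultimately show ?thesis unfolding IWB by simp
    qed
    have key: "WB * (r ^ n * m)\<^sup>2 \<le> WE * (max A 0 * (R ^ n * m)\<^sup>2)"
    proof (cases "(\<integral>\<^sup>+ y\<in>B. inverse (ennreal (w y)) \<partial>lborel) = \<infinity>")
      case True
      then have "WB = 0" using AB WE0 by (cases "WB = 0") (auto simp: ennreal_mult_top top_unique)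
      then show ?thesis using WE0 by simp
    next
      case False
      have sub: "(\<integral>\<^sup>+ y\<in>E. inverse (ennreal (w y)) \<partial>lborel) \<le> (\<integral>\<^sup>+ y\<in>B. inverse (ennreal (w y)) \<partial>lborel)"
        unfolding E_def B_def using r by (intro nn_integral_mono) (auto split: split_indicator)
      have fin: "(\<integral>\<^sup>+ y\<in>E. inverse (ennreal (w y)) \<partial>lborel) < \<infinity>"
        by (rule le_less_trans[OF sub]) (use False in \<open>simp add: less_top\<close>)
      have cs: "(emeasure lborel E)\<^sup>2 \<le> ennreal WE * (\<integral>\<^sup>+ y\<in>B. inverse (ennreal (w y)) \<partial>lborel)"
      proof -
        have "(emeasure lborel E)\<^sup>2 \<le> ennreal WE * (\<integral>\<^sup>+ y\<in>E. inverse (ennreal (w y)) \<partial>lborel)"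
          using CS_part[OF wA2 _ fin] unfolding IWE by (simp add: E_def)
        also have "\<dots> \<le> ennreal WE * (\<integral>\<^sup>+ y\<in>B. inverse (ennreal (w y)) \<partial>lborel)"
          by (rule mult_left_mono[OF sub]) simp
        finally show ?thesis .
      qed
      have "ennreal (WB * (r ^ n * m)\<^sup>2) = ennreal WB * (emeasure lborel E)\<^sup>2"
      proof -
        have e2: "(emeasure lborel E)\<^sup>2 = ennreal ((r ^ n * m)\<^sup>2)" using mE m r by (simp add: ennreal_power)
        show ?thesis unfolding e2 using WE0 by (intro ennreal_mult) auto
      qed
      also have "\<dots> \<le> ennreal WB * (ennreal WE * (\<integral>\<^sup>+ y\<in>B. inverse (ennreal (w y)) \<partial>lborel))"
        by (intro mult_left_mono cs) auto
      also have "\<dots> = ennreal WE * (ennreal WB * (\<integral>\<^sup>+ y\<in>B. inverse (ennreal (w y)) \<partial>lborel))"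
        by (simp add: ac_simps)
      also have "\<dots> \<le> ennreal WE * ennreal (max A 0 * (R ^ n * m)\<^sup>2)"
        by (intro mult_left_mono AB) auto
      also have "\<dots> = ennreal (WE * (max A 0 * (R ^ n * m)\<^sup>2))"
        using WE0 by (simp add: ennreal_mult')
      finally have fin: "ennreal (WB * (r ^ n * m)\<^sup>2) \<le> ennreal (WE * (max A 0 * (R ^ n * m)\<^sup>2))" .
      have "0 \<le> WE * (max A 0 * (R ^ n * m)\<^sup>2)" using WE0 by simp
      then show ?thesis using fin ennreal_le_iff by blast
    qed
    have rpos: "(r ^ n * m)\<^sup>2 > 0" using r m by simp
    have "WB \<le> WE * (max A 0 * (R ^ n * m)\<^sup>2) / (r ^ n * m)\<^sup>2"
      using key rpos by (subst pos_le_divide_eq) auto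
    also have "\<dots> = max A 0 * (R / r) ^ (2 * n) * WE"
    proof -
      have e: "(R / r) ^ (2 * n) = (R ^ n / r ^ n)\<^sup>2"
        by (simp add: power_divide mult.commute[of 2] power_mult)
      have Q: "r ^ n > 0" using r by simp
      have g: "\<And>P Q. Q > 0 \<Longrightarrow> WE * (max A 0 * (P * m)\<^sup>2) / (Q * m)\<^sup>2 = max A 0 * (P / Q)\<^sup>2 * WE"
        using m by (simp add: field_simps power2_eq_square)
      show ?thesis unfolding e using g[OF Q] .
    qed
    also have "\<dots> \<le> K * (R / r) ^ (2 * n) * WE"
      using WE0 r unfolding K_def by (intro mult_right_mono) auto
    finally show ?thesis unfolding WB_def WE_def B_def E_def .
  qed
  moreover have "K \<ge> 1" unfolding K_def by simp
  ultimately show ?thesis unfolding n_def by blast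
qed

definition ee :: "real \<Rightarrow> nat \<Rightarrow> real" where
  "ee c k = (if k = 0 then 1 else exp (- (4 ^ (k - 1)) / c))"

definition bterm :: "real \<Rightarrow> nat \<Rightarrow> real \<Rightarrow> real \<Rightarrow> nat \<Rightarrow> real" where
  "bterm K d c p k = K * 4 ^ (d * (k + 1)) * ee c k / 4 ^ k * 2 powr (real k * p)"

lemma bterm_nonneg: "K \<ge> 0 \<Longrightarrow> bterm K d c p k \<ge> 0"
  unfolding bterm_def ee_def by auto

lemma bterm_step:
  "bterm K d c p (Suc (Suc j)) = bterm K d c p (Suc j) * (4 ^ d / 4 * 2 powr p * exp (- 3 * 4 ^ j / c))"
proof -
  have e: "exp (- (4 ^ Suc j) / c) = exp (- (4 ^ j) / c) * exp (- 3 * 4 ^ j / c)"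
    by (simp add: exp_add[symmetric] field_simps)
  have p: "2 powr (real (Suc (Suc j)) * p) = 2 powr (real (Suc j) * p) * 2 powr p"
    by (simp add: powr_add[symmetric] algebra_simps)
  have q: "(4::real) ^ (d * (Suc (Suc j) + 1)) = 4 ^ (d * (Suc j + 1)) * 4 ^ d"
    by (simp add: power_add[symmetric] algebra_simps)
  have L: "bterm K d c p (Suc (Suc j)) = K * (4 ^ (d * (Suc j + 1)) * 4 ^ d) * (exp (- (4 ^ j) / c) * exp (- 3 * 4 ^ j / c)) / (4 ^ Suc j * 4) * (2 powr (real (Suc j) * p) * 2 powr p)"
    unfolding bterm_def ee_def e[symmetric] p[symmetric] q[symmetric] by simp
  have R: "bterm K d c p (Suc j) = K * 4 ^ (d * (Suc j + 1)) * exp (- (4 ^ j) / c) / 4 ^ Suc j * 2 powr (real (Suc j) * p)"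
    unfolding bterm_def ee_def by simp
  show ?thesis unfolding L R by (simp add: field_simps)
qed

lemma bterm_summable:
  assumes c: "c > 0" and K: "K \<ge> 0"
  shows "summable (bterm K d c p)"
proof -
  define B where "B = 4 ^ d / 4 * 2 powr p"
  have B: "B > 0" unfolding B_def by simp
  have "((\<lambda>j. B * exp (- 3 * real j / c)) \<longlongrightarrow> 0) sequentially"
  proof -
    have q: "exp (- 3 * real j / c) = exp (- 3 / c) ^ j" for j
      by (simp add: exp_of_nat_mult[symmetric] field_simps)
    have "(\<lambda>j. exp (- 3 / c) ^ j) \<longlonglongrightarrow> 0"
      by (rule LIMSEQ_power_zero) (use c in simp)
    then have "(\<lambda>j. B * exp (- 3 / c) ^ j) \<longlonglongrightarrow> B * 0"
      by (intro tendsto_mult tendsto_const)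
    then show ?thesis unfolding q by simp
  qed
  then have "eventually (\<lambda>j. B * exp (- 3 * real j / c) < 1 / 2) sequentially"
    by (rule order_tendstoD) simp
  then obtain N where N: "\<And>j. j \<ge> N \<Longrightarrow> B * exp (- 3 * real j / c) < 1 / 2"
    by (auto simp: eventually_sequentially)
  show ?thesis
  proof (rule summable_ratio_test[where c = "1/2" and N = "Suc N"])
    fix n assume n: "Suc N \<le> n"
    then obtain j where j: "n = Suc j" "j \<ge> N" by (cases n) auto
    have "real j \<le> 4 ^ j"
    proof -
      have "j < 2 ^ j" by (rule less_exp)
      then have "real j \<le> 2 ^ j" by (metis less_imp_le of_nat_le_iff of_nat_numeral of_nat_power)
      also have "(2::real) ^ j \<le> 4 ^ j" by (rule power_mono) auto
      finally show ?thesis .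
    qed
    then have "exp (- 3 * 4 ^ j / c) \<le> exp (- 3 * real j / c)"
      using c by (simp add: divide_right_mono)
    then have le: "B * exp (- 3 * 4 ^ j / c) \<le> 1 / 2"
      using N[OF j(2)] B by (smt (verit) mult_left_mono)
    have bn: "bterm K d c p n \<ge> 0" by (rule bterm_nonneg[OF K])
    have "bterm K d c p (Suc n) = bterm K d c p n * (B * exp (- 3 * 4 ^ j / c))"
      unfolding j(1) bterm_step B_def by simp
    also have "\<dots> \<le> bterm K d c p n * (1/2)"
      by (rule mult_left_mono[OF le bn])
    finally show "norm (bterm K d c p (Suc n)) \<le> 1 / 2 * norm (bterm K d c p n)"
      using bn bterm_nonneg[OF K, of d c p "Suc n"] by simp
  qed simp
qed

lemma two_pow_double: "(2::real) ^ (2 * m) = 4 ^ m" by (simp add: power_mult)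

lemma pointwise_bound:
  fixes w :: "'a::euclidean_space \<Rightarrow> real"
  assumes wA2: "A2_weight w"
    and K: "K \<ge> 1" and dbl: "\<forall>y r R. 0 < r \<longrightarrow> r \<le> R \<longrightarrow>
     wmeas w (ball y R) \<le> K * (R / r) ^ (2 * DIM('a)) * wmeas w (ball y r)"
    and t: "t > 0" and c: "c > 0"
  shows "\<exists>k. dist x y < 2 ^ k * sqrt t \<and>
     1 / min (wmeas w (ball x (sqrt t))) (wmeas w (ball y (sqrt t))) * exp (- (dist x y)\<^sup>2 / (c * t))
       \<le> K * 4 ^ (DIM('a) * (k + 1)) * ee c k / wmeas w (ball x (2 ^ k * sqrt t))"
proof -
  define d where "d = DIM('a)"
  define st where "st = sqrt t"
  have st: "st > 0" unfolding st_def using t by simp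
  have "\<exists>k. dist x y / st < 2 ^ k" by (rule real_arch_pow) simp
  then have ex: "\<exists>k. dist x y < 2 ^ k * st" using st by (simp add: divide_less_eq)
  define k where "k = (LEAST k. dist x y < 2 ^ k * st)"
  have kin: "dist x y < 2 ^ k * st" unfolding k_def by (rule LeastI_ex[OF ex])
  have kmin: "\<not> dist x y < 2 ^ (k - 1) * st" if "k > 0"
  proof
    assume "dist x y < 2 ^ (k - 1) * st"
    then have "k \<le> k - 1" unfolding k_def by (rule Least_le)
    with that show False by simp
  qed
  define W0 where "W0 = wmeas w (ball x st)"
  define Wy where "Wy = wmeas w (ball y st)"
  define Wk where "Wk = wmeas w (ball x (2 ^ k * st))"
  define Kd where "Kd = K * 4 ^ (d * (k + 1))"
  have Kd: "Kd > 0" unfolding Kd_def using K by simp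
  have nn: "W0 \<ge> 0" "Wy \<ge> 0" "Wk \<ge> 0" unfolding W0_def Wy_def Wk_def by (auto simp: Wm_nonneg)
  have expb: "exp (- (dist x y)\<^sup>2 / (c * t)) \<le> ee c k"
  proof (cases "k = 0")
    case True
    then show ?thesis unfolding ee_def using c t by simp
  next
    case False
    then have "dist x y \<ge> 2 ^ (k - 1) * st" using kmin by force
    then have "(2 ^ (k - 1) * st)\<^sup>2 \<le> (dist x y)\<^sup>2"
      using st by (intro power_mono) auto
    then have "4 ^ (k - 1) * t \<le> (dist x y)\<^sup>2"
    proof -
      have h4: "\<And>m. (2::real) ^ (2 * m) = 4 ^ m" by (simp add: power_mult)
      show ?thesis using \<open>(2 ^ (k - 1) * st)\<^sup>2 \<le> (dist x y)\<^sup>2\<close> t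
        by (simp add: st_def power_mult_distrib power_mult[symmetric] mult.commute[of _ 2] h4)
    qed
    then have "4 ^ (k - 1) / c \<le> (dist x y)\<^sup>2 / (c * t)"
      using c t by (simp add: field_simps)
    then show ?thesis unfolding ee_def using False by simp
  qed
  have main: "1 / min W0 Wy * exp (- (dist x y)\<^sup>2 / (c * t)) \<le> Kd * ee c k / Wk"
  proof (cases "W0 = 0")
    case True
    then have "min W0 Wy = 0" using nn by simp
    then show ?thesis using nn Kd unfolding ee_def by simp
  next
    case False
    then have W0p: "W0 > 0" using nn by simp
    have "W0 \<le> Wk" unfolding W0_def Wk_def
      using st by (intro Wm_mono[OF wA2]) (auto intro!: subset_ball simp: order_trans[OF _ one_le_power])
    then have Wkp: "Wk > 0" using W0p by simp
    have "Wk \<le> wmeas w (ball y (2 * (2 ^ k * st)))"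
    proof -
      have "ball x (2 ^ k * st) \<subseteq> ball y (2 * (2 ^ k * st))"
      proof
        fix z assume "z \<in> ball x (2 ^ k * st)"
        then have "dist x z < 2 ^ k * st" by simp
        moreover have "dist y z \<le> dist x y + dist x z" by (metis dist_commute dist_triangle)
        ultimately show "z \<in> ball y (2 * (2 ^ k * st))" using kin by simp
      qed
      then show ?thesis unfolding Wk_def by (rule Wm_mono[OF wA2])
    qed
    also have "\<dots> \<le> K * ((2 * (2 ^ k * st)) / st) ^ (2 * d) * Wy"
    proof -
      have "st \<le> 2 * (2 ^ k * st)" using st by (simp add: one_le_power order_trans[OF _ mult_right_mono[of 1]])
      then show ?thesis unfolding Wy_def d_def using dbl[rule_format, of st "2 * (2 ^ k * st)" y] st by simp
    qed
    also have "\<dots> = Kd * Wy"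
    proof -
      have a: "(2 * (2 ^ k * st)) / st = (2::real) ^ (k + 1)" using st by simp
      have b: "((2::real) ^ (k + 1)) ^ (2 * d) = 2 ^ ((k + 1) * (2 * d))" by (rule power_mult[symmetric])
      have c4: "(4::real) ^ (d * (k + 1)) = 2 ^ (2 * (d * (k + 1)))" by (rule two_pow_double[symmetric])
      have "(k + 1) * (2 * d) = 2 * (d * (k + 1))" by simp
      then show ?thesis unfolding Kd_def a b c4 by simp
    qed
    finally have y: "Wk \<le> Kd * Wy" .
    have "Wk \<le> K * ((2 ^ k * st) / st) ^ (2 * d) * W0"
    proof -
      have "st \<le> 2 ^ k * st" using st by (simp add: one_le_power)
      then show ?thesis unfolding Wk_def W0_def d_def using dbl[rule_format, of st "2 ^ k * st" x] st by simp
    qed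
    also have "\<dots> \<le> Kd * W0"
    proof -
      have a: "(2 ^ k * st) / st = (2::real) ^ k" using st by simp
      have b: "((2::real) ^ k) ^ (2 * d) = 2 ^ (k * (2 * d))" by (rule power_mult[symmetric])
      have c4: "(4::real) ^ (d * (k + 1)) = 2 ^ (2 * (d * (k + 1)))" by (rule two_pow_double[symmetric])
      have "k * (2 * d) \<le> 2 * (d * (k + 1))" by simp
      then have "((2 ^ k * st) / st) ^ (2 * d) \<le> (4::real) ^ (d * (k + 1))"
        unfolding a b c4 by (intro power_increasing) auto
      then have "K * ((2 ^ k * st) / st) ^ (2 * d) \<le> K * (4::real) ^ (d * (k + 1))"
        by (rule mult_left_mono) (use K in auto)
      then show ?thesis unfolding Kd_def by (rule mult_right_mono) (use nn in auto)
    qed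
    finally have x: "Wk \<le> Kd * W0" .
    have mn: "Wk / Kd \<le> min W0 Wy" using x y Kd by (simp add: divide_le_eq mult.commute)
    have mp: "0 < Wk / Kd" using Wkp Kd by simp
    have "1 / min W0 Wy \<le> 1 / (Wk / Kd)"
    proof -
      have hm: "0 < min W0 Wy" using mp mn by linarith
      show ?thesis by (rule divide_left_mono[OF mn]) (use mp hm Kd Wkp in \<open>auto intro!: divide_pos_pos mult_pos_pos\<close>)
    qed
    also have "\<dots> = Kd / Wk" by simp
    finally have a: "1 / min W0 Wy \<le> Kd / Wk" .
    have "1 / min W0 Wy * exp (- (dist x y)\<^sup>2 / (c * t)) \<le> Kd / Wk * ee c k"
      by (rule mult_mono[OF a expb]) (use Kd Wkp mp mn in auto)
    then show ?thesis by simp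
  qed
  show ?thesis
    using kin main unfolding W0_def Wy_def Wk_def Kd_def st_def d_def by blast
qed

lemma core_integral:
  fixes w :: "'a::euclidean_space \<Rightarrow> real" and \<pi> :: "'a measure"
  assumes wA2: "A2_weight w"
    and K: "K \<ge> 1" and dbl: "\<forall>y r R. 0 < r \<longrightarrow> r \<le> R \<longrightarrow>
     wmeas w (ball y R) \<le> K * (R / r) ^ (2 * DIM('a)) * wmeas w (ball y r)"
    and sp: "sets \<pi> = sets borel"
    and t: "t > 0" and c: "c > 0" and G: "G \<ge> 0" and S: "S \<ge> 0"
    and vals: "\<And>k::nat. ennreal ((2 ^ k * sqrt t)\<^sup>2 / wmeas w (ball x (2 ^ k * sqrt t)))
                 * emeasure \<pi> (ball x (2 ^ k * sqrt t)) \<le> ennreal (G * 2 powr (real k * p) * S)"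
  shows "(\<integral>\<^sup>+ y. ennreal (1 / min (wmeas w (ball x (sqrt t))) (wmeas w (ball y (sqrt t)))
                        * exp (- (dist x y)\<^sup>2 / (c * t))) \<partial>\<pi>)
         \<le> ennreal ((\<Sum>k. bterm K DIM('a) c p k) * G / t * S)"
proof -
  define d where "d = DIM('a)"
  define R where "R k = (2::real) ^ k * sqrt t" for k :: nat
  define W where "W k = wmeas w (ball x (R k))" for k
  define cc where "cc k = K * 4 ^ (d * (k + 1)) * ee c k / W k" for k
  define a where "a k = K * 4 ^ (d * (k + 1)) * ee c k / (4 ^ k * t)" for k :: nat
  have ee0: "ee c k \<ge> 0" for k unfolding ee_def by auto
  have Wn: "W k \<ge> 0" for k unfolding W_def by (simp add: Wm_nonneg)
  have cc0: "cc k \<ge> 0" for k unfolding cc_def using K ee0 Wn by simp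
  have a0: "a k \<ge> 0" for k unfolding a_def using K ee0 t by simp
  have Rsq: "(R k)\<^sup>2 = 4 ^ k * t" for k
    unfolding R_def using t by (simp add: power_mult_distrib two_pow_double[symmetric] power_mult[symmetric] mult.commute[of k])
  have pt: "ennreal (1 / min (wmeas w (ball x (sqrt t))) (wmeas w (ball y (sqrt t)))
                        * exp (- (dist x y)\<^sup>2 / (c * t)))
        \<le> (\<Sum>k. ennreal (cc k) * indicator (ball x (R k)) y)" for y
  proof -
    obtain k where k1: "dist x y < 2 ^ k * sqrt t" and
      k2: "1 / min (wmeas w (ball x (sqrt t))) (wmeas w (ball y (sqrt t))) * exp (- (dist x y)\<^sup>2 / (c * t))
       \<le> K * 4 ^ (DIM('a) * (k + 1)) * ee c k / wmeas w (ball x (2 ^ k * sqrt t))"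
      using pointwise_bound[OF wA2 K dbl t c, of x y] by blast
    have "ennreal (1 / min (wmeas w (ball x (sqrt t))) (wmeas w (ball y (sqrt t)))
                        * exp (- (dist x y)\<^sup>2 / (c * t))) \<le> ennreal (cc k)"
      using k2 unfolding cc_def W_def R_def d_def by (rule ennreal_leI)
    also have "\<dots> = ennreal (cc k) * indicator (ball x (R k)) y"
      using k1 unfolding R_def by simp
    also have "\<dots> \<le> (\<Sum>j. ennreal (cc j) * indicator (ball x (R j)) y)"
    proof -
      have sg: "(\<Sum>j\<in>{k}. F j) = F k" for F :: "nat \<Rightarrow> ennreal" by simp
      have "(\<Sum>j\<in>{k}. F j) \<le> suminf F" for F :: "nat \<Rightarrow> ennreal"
        by (rule sum_le_suminf) (auto intro: summableI)
      then show ?thesis unfolding sg .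
    qed
    finally show ?thesis .
  qed
  have meas: "(\<lambda>y. ennreal (cc k) * indicator (ball x (R k)) y) \<in> borel_measurable \<pi>" for k
  proof -
    have "ball x (R k) \<in> sets \<pi>" using sp by simp
    then show ?thesis by (intro borel_measurable_times_ennreal borel_measurable_const borel_measurable_indicator)
  qed
  have "(\<integral>\<^sup>+ y. ennreal (1 / min (wmeas w (ball x (sqrt t))) (wmeas w (ball y (sqrt t)))
                        * exp (- (dist x y)\<^sup>2 / (c * t))) \<partial>\<pi>)
     \<le> (\<integral>\<^sup>+ y. (\<Sum>k. ennreal (cc k) * indicator (ball x (R k)) y) \<partial>\<pi>)"
    by (rule nn_integral_mono) (rule pt)
  also have "\<dots> = (\<Sum>k. \<integral>\<^sup>+ y. ennreal (cc k) * indicator (ball x (R k)) y \<partial>\<pi>)"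
    by (rule nn_integral_suminf) (rule meas)
  also have "\<dots> = (\<Sum>k. ennreal (cc k) * emeasure \<pi> (ball x (R k)))"
    using sp by (simp add: nn_integral_cmult_indicator)
  also have "\<dots> \<le> (\<Sum>k. ennreal (bterm K d c p k * (G * S / t)))"
  proof (rule suminf_le)
    fix k
    have "cc k = a k * ((R k)\<^sup>2 / W k)"
      unfolding cc_def a_def Rsq using t by (simp add: field_simps)
    then have "ennreal (cc k) = ennreal (a k) * ennreal ((R k)\<^sup>2 / W k)"
      unfolding \<open>cc k = a k * ((R k)\<^sup>2 / W k)\<close> using a0 Wn by (intro ennreal_mult) auto
    then have "ennreal (cc k) * emeasure \<pi> (ball x (R k)) = ennreal (a k) * (ennreal ((R k)\<^sup>2 / W k) * emeasure \<pi> (ball x (R k)))"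
      by (simp add: mult.assoc)
    also have "\<dots> \<le> ennreal (a k) * ennreal (G * 2 powr (real k * p) * S)"
      by (rule mult_left_mono) (use vals[of k] in \<open>auto simp: R_def W_def\<close>)
    also have "\<dots> = ennreal (a k * (G * 2 powr (real k * p) * S))"
      using a0 G S by (simp add: ennreal_mult)
    also have "a k * (G * 2 powr (real k * p) * S) = bterm K d c p k * (G * S / t)"
      unfolding a_def bterm_def using t by (simp add: field_simps)
    finally show "ennreal (cc k) * emeasure \<pi> (ball x (R k)) \<le> ennreal (bterm K d c p k * (G * S / t))" .
  qed (auto intro: summableI)
  also have "\<dots> = ennreal (\<Sum>k. bterm K d c p k * (G * S / t))"
    using bterm_summable[OF c, of K d p] K G S t bterm_nonneg[of K]
    by (intro suminf_ennreal2 summable_mult2) auto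
  also have "(\<Sum>k. bterm K d c p k * (G * S / t)) = (\<Sum>k. bterm K d c p k) * G / t * S"
    using suminf_mult2[OF bterm_summable[OF c, of K d p], of "G * S / t"] K by simp
  finally show ?thesis unfolding d_def .
qed

lemma pow2_powr: "((2::real) ^ k) powr q = 2 powr (real k * q)"
  by (simp add: powr_realpow[symmetric] powr_powr)

lemma pow2_pow: "((2::real) ^ k) ^ N0 = 2 powr (real k * real N0)"
proof -
  have "((2::real) ^ k) ^ N0 = ((2::real) ^ k) powr (real N0)" by (rule powr_realpow[symmetric]) simp
  also have "\<dots> = 2 powr (real k * real N0)" by (rule pow2_powr)
  finally show ?thesis .
qed

lemma vals_a:
  fixes V :: "real \<Rightarrow> ennreal"
  assumes rho: "\<rho> > 0" and t: "t > 0" and a: "a > 0" and ta: "sqrt t \<le> a * \<rho>"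
    and \<delta>: "\<delta> > 0" and C0: "C0 > 0" and C1: "C1 > 0" and C': "C' > 0"
    and small: "\<And>R. 0 < R \<Longrightarrow> R < \<rho> \<Longrightarrow> V R \<le> ennreal (C0 * C1 * 2 powr \<delta> * (R / \<rho>) powr \<delta>)"
    and big: "\<And>R. \<rho> \<le> R \<Longrightarrow> V R \<le> ennreal (C' * (R / \<rho>) ^ N0)"
  shows "V (2 ^ k * sqrt t) \<le> ennreal ((C0 * C1 * 2 powr \<delta> + C' * a ^ N0) * 2 powr (real k * (\<delta> + real N0)) * (sqrt t / \<rho>) powr \<delta>)"
proof -
  define s where "s = sqrt t / \<rho>"
  define u where "u = 2 ^ k * s"
  have s: "s > 0" "s \<le> a" unfolding s_def using rho t ta by (auto simp: divide_le_eq)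
  have u: "u = 2 ^ k * sqrt t / \<rho>" unfolding u_def s_def by simp
  have upow: "u powr \<delta> = 2 powr (real k * \<delta>) * s powr \<delta>"
    unfolding u_def using s by (simp add: powr_mult pow2_powr)
  have pk: "2 powr (real k * \<delta>) \<le> 2 powr (real k * (\<delta> + real N0))"
    by (intro powr_mono) (auto simp: algebra_simps)
  have sp: "s powr \<delta> \<ge> 0" by simp
  show ?thesis
  proof (cases "2 ^ k * sqrt t < \<rho>")
    case True
    have "V (2 ^ k * sqrt t) \<le> ennreal (C0 * C1 * 2 powr \<delta> * u powr \<delta>)"
      unfolding u using small[OF _ True] t by simp
    also have "\<dots> \<le> ennreal ((C0 * C1 * 2 powr \<delta> + C' * a ^ N0) * 2 powr (real k * (\<delta> + real N0)) * s powr \<delta>)"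
    proof (rule ennreal_leI)
      have "C0 * C1 * 2 powr \<delta> * u powr \<delta> = (C0 * C1 * 2 powr \<delta>) * 2 powr (real k * \<delta>) * s powr \<delta>"
        unfolding upow by simp
      also have "\<dots> \<le> (C0 * C1 * 2 powr \<delta> + C' * a ^ N0) * 2 powr (real k * (\<delta> + real N0)) * s powr \<delta>"
        using C0 C1 C' a pk sp by (intro mult_right_mono mult_mono) auto
      finally show "C0 * C1 * 2 powr \<delta> * u powr \<delta> \<le> (C0 * C1 * 2 powr \<delta> + C' * a ^ N0) * 2 powr (real k * (\<delta> + real N0)) * s powr \<delta>" .
    qed
    finally show ?thesis unfolding s_def .
  next
    case False
    then have ge: "\<rho> \<le> 2 ^ k * sqrt t" by simp
    have u1: "u \<ge> 1" unfolding u using ge rho by simp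
    have "V (2 ^ k * sqrt t) \<le> ennreal (C' * u ^ N0)"
      unfolding u using big[OF ge] by simp
    also have "\<dots> \<le> ennreal ((C0 * C1 * 2 powr \<delta> + C' * a ^ N0) * 2 powr (real k * (\<delta> + real N0)) * s powr \<delta>)"
    proof (rule ennreal_leI)
      have "u ^ N0 \<le> (2 ^ k * a) ^ N0"
        unfolding u_def using s u1 by (intro power_mono) auto
      also have "\<dots> = a ^ N0 * 2 powr (real k * real N0)"
        unfolding power_mult_distrib pow2_pow by simp
      finally have un: "u ^ N0 \<le> a ^ N0 * 2 powr (real k * real N0)" .
      have ud: "1 \<le> u powr \<delta>" using u1 \<delta> by (simp add: ge_one_powr_ge_zero)
      have "u ^ N0 \<le> u powr \<delta> * u ^ N0"
        using ud u1 by simp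
      also have "\<dots> \<le> u powr \<delta> * (a ^ N0 * 2 powr (real k * real N0))"
        by (rule mult_left_mono[OF un]) simp
      also have "\<dots> = a ^ N0 * 2 powr (real k * (\<delta> + real N0)) * s powr \<delta>"
        unfolding upow by (simp add: algebra_simps powr_add[symmetric])
      finally have "C' * u ^ N0 \<le> C' * (a ^ N0 * 2 powr (real k * (\<delta> + real N0)) * s powr \<delta>)"
        using C' by simp
      also have "\<dots> \<le> (C0 * C1 * 2 powr \<delta> + C' * a ^ N0) * 2 powr (real k * (\<delta> + real N0)) * s powr \<delta>"
        using C0 C1 C' a sp by (simp add: algebra_simps)
      finally show "C' * u ^ N0 \<le> (C0 * C1 * 2 powr \<delta> + C' * a ^ N0) * 2 powr (real k * (\<delta> + real N0)) * s powr \<delta>" .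
    qed
    finally show ?thesis unfolding s_def .
  qed
qed

lemma vals_b:
  fixes V :: "real \<Rightarrow> ennreal"
  assumes rho: "\<rho> > 0" and t: "t > 0" and a: "a > 0" and ta: "a * \<rho> \<le> sqrt t"
    and \<delta>: "\<delta> > 0" and C0: "C0 > 0" and C1: "C1 > 0" and C': "C' > 0"
    and small: "\<And>R. 0 < R \<Longrightarrow> R < \<rho> \<Longrightarrow> V R \<le> ennreal (C0 * C1 * 2 powr \<delta> * (R / \<rho>) powr \<delta>)"
    and big: "\<And>R. \<rho> \<le> R \<Longrightarrow> V R \<le> ennreal (C' * (R / \<rho>) ^ N0)"
  shows "V (2 ^ k * sqrt t) \<le> ennreal ((C' + C0 * C1 * 2 powr \<delta> / a ^ N0) * 2 powr (real k * real N0) * (sqrt t / \<rho>) ^ N0)"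
proof -
  define s where "s = sqrt t / \<rho>"
  define u where "u = 2 ^ k * s"
  have s: "s > 0" "a \<le> s" unfolding s_def using rho t ta by (auto simp: le_divide_eq)
  have u: "u = 2 ^ k * sqrt t / \<rho>" unfolding u_def s_def by simp
  have pk: "1 \<le> 2 powr (real k * real N0)" by (rule ge_one_powr_ge_zero) auto
  have sN: "s ^ N0 \<ge> 0" using s by simp
  show ?thesis
  proof (cases "2 ^ k * sqrt t < \<rho>")
    case True
    have u0: "0 \<le> u" "u < 1" unfolding u using True rho t by auto
    have "V (2 ^ k * sqrt t) \<le> ennreal (C0 * C1 * 2 powr \<delta> * u powr \<delta>)"
      unfolding u using small[OF _ True] t by simp
    also have "\<dots> \<le> ennreal ((C' + C0 * C1 * 2 powr \<delta> / a ^ N0) * 2 powr (real k * real N0) * s ^ N0)"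
    proof (rule ennreal_leI)
      have "u powr \<delta> \<le> 1 powr \<delta>" using u0 \<delta> by (intro powr_mono2) auto
      then have up: "u powr \<delta> \<le> 1" by simp
      have "a ^ N0 \<le> s ^ N0" using s a by (intro power_mono) auto
      then have q: "1 \<le> s ^ N0 / a ^ N0" using a by simp
      have "C0 * C1 * 2 powr \<delta> * u powr \<delta> \<le> C0 * C1 * 2 powr \<delta> * 1"
        using up C0 C1 by (intro mult_left_mono) auto
      also have "\<dots> \<le> C0 * C1 * 2 powr \<delta> * (s ^ N0 / a ^ N0)"
        using q C0 C1 by (intro mult_left_mono) auto
      also have "\<dots> = (C0 * C1 * 2 powr \<delta> / a ^ N0) * s ^ N0" by simp
      also have "\<dots> \<le> (C0 * C1 * 2 powr \<delta> / a ^ N0) * 2 powr (real k * real N0) * s ^ N0"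
      proof -
        have X0: "0 \<le> C0 * C1 * 2 powr \<delta> / a ^ N0" using C0 C1 a by simp
        have "C0 * C1 * 2 powr \<delta> / a ^ N0 * 1 \<le> C0 * C1 * 2 powr \<delta> / a ^ N0 * 2 powr (real k * real N0)"
          by (rule mult_left_mono[OF pk X0])
        then show ?thesis by (intro mult_right_mono[OF _ sN]) simp
      qed
      also have "\<dots> \<le> (C' + C0 * C1 * 2 powr \<delta> / a ^ N0) * 2 powr (real k * real N0) * s ^ N0"
        using C' sN by (intro mult_right_mono) auto
      finally show "C0 * C1 * 2 powr \<delta> * u powr \<delta> \<le> (C' + C0 * C1 * 2 powr \<delta> / a ^ N0) * 2 powr (real k * real N0) * s ^ N0" .
    qed
    finally show ?thesis unfolding s_def .
  next
    case False
    then have ge: "\<rho> \<le> 2 ^ k * sqrt t" by simp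
    have "V (2 ^ k * sqrt t) \<le> ennreal (C' * u ^ N0)"
      unfolding u using big[OF ge] by simp
    also have "\<dots> \<le> ennreal ((C' + C0 * C1 * 2 powr \<delta> / a ^ N0) * 2 powr (real k * real N0) * s ^ N0)"
    proof (rule ennreal_leI)
      have "u ^ N0 = 2 powr (real k * real N0) * s ^ N0"
        unfolding u_def power_mult_distrib pow2_pow by simp
      then show "C' * u ^ N0 \<le> (C' + C0 * C1 * 2 powr \<delta> / a ^ N0) * 2 powr (real k * real N0) * s ^ N0"
        using C0 C1 C' a sN by (simp add: algebra_simps)
    qed
    finally show ?thesis unfolding s_def .
  qed
qed

theorem lemma2p3:
  fixes w :: "'a::euclidean_space \<Rightarrow> real" and M :: "'a measure"
    and C0 \<delta> C1 C' c :: real and N0 :: nat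
  defines "\<pi> \<equiv> density M (\<lambda>y. ennreal (w y))"
  defines "\<rho> \<equiv> rho_w w M C1"
  assumes dim: "DIM('a) \<ge> 3"
    and wA2: "A2_weight w"
    and wgrowth: "\<exists>\<beta>>2. \<exists>C>0. \<forall>x r s. 0 < r \<longrightarrow> 1 < s \<longrightarrow>
                   wmeas w (ball x (s * r)) \<ge> C * s powr \<beta> * wmeas w (ball x r)"
    and radon: "radon_measure M"
    and C0: "C0 > 0" and \<delta>: "\<delta> > 0" and C1: "C1 > 0"
    and M1: "\<forall>x r R. 0 < r \<longrightarrow> r < R \<longrightarrow>
               ennreal (r\<^sup>2 / wmeas w (ball x r)) * emeasure \<pi> (ball x r)
                 \<le> ennreal (C0 * (r / R) powr \<delta> * (R\<^sup>2 / wmeas w (ball x R))) * emeasure \<pi> (ball x R)"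
    and M2: "\<forall>x r. 0 < r \<longrightarrow>
               emeasure \<pi> (ball x (2 * r))
                 \<le> ennreal C1 * (emeasure \<pi> (ball x r) + ennreal (wmeas w (ball x r) / r\<^sup>2))"
    and rho_wd: "\<forall>x. crit_set w M C1 x \<noteq> {} \<and> bdd_above (crit_set w M C1 x)"
    and C': "C' > 0"
    and N0: "\<forall>x R. \<rho> x \<le> R \<longrightarrow>
               ennreal (R\<^sup>2 / wmeas w (ball x R)) * emeasure \<pi> (ball x R)
                 \<le> ennreal (C' * (R / \<rho> x) ^ N0)"
    and c: "c > 0"
  shows "(\<forall>a>0. \<exists>C>0. \<forall>x t. 0 < t \<longrightarrow> sqrt t \<le> a * \<rho> x \<longrightarrow>
            (\<integral>\<^sup>+ y. ennreal (1 / min (wmeas w (ball x (sqrt t))) (wmeas w (ball y (sqrt t)))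
                        * exp (- (dist x y)\<^sup>2 / (c * t))) \<partial>\<pi>)
              \<le> ennreal (C / t * (sqrt t / \<rho> x) powr \<delta>))
       \<and> (\<forall>a>0. \<exists>C>0. \<forall>x t. 0 < t \<longrightarrow> a * \<rho> x \<le> sqrt t \<longrightarrow>
            (\<integral>\<^sup>+ y. ennreal (1 / min (wmeas w (ball x (sqrt t))) (wmeas w (ball y (sqrt t)))
                        * exp (- (dist x y)\<^sup>2 / (c * t))) \<partial>\<pi>)
              \<le> ennreal (C / t * (sqrt t / \<rho> x) ^ N0))"
proof -
  have sp: "sets \<pi> = sets borel"
    using radon unfolding \<pi>_def radon_measure_def by simp
  obtain K where K: "K \<ge> 1" and dbl: "\<forall>y r R. 0 < r \<longrightarrow> r \<le> R \<longrightarrow>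
     wmeas w (ball y R) \<le> K * (R / r) ^ (2 * DIM('a)) * wmeas w (ball y r)"
    using Wm_doubling[OF wA2] by blast
  have crit: "crit_set w M C1 x = {r. 0 < r \<and> ennreal (r\<^sup>2 / wmeas w (ball x r)) * emeasure \<pi> (ball x r) \<le> ennreal C1}" for x
    unfolding crit_set_def \<pi>_def by simp
  have rhoS: "\<rho> x = Sup (crit_set w M C1 x)" for x unfolding \<rho>_def rho_w_def by simp
  have rho_pos: "\<rho> x > 0" for x
  proof -
    obtain r where r: "r \<in> crit_set w M C1 x" using rho_wd by blast
    then have "r \<le> \<rho> x" unfolding rhoS using rho_wd by (intro cSup_upper) auto
    moreover have "r > 0" using r unfolding crit by simp
    ultimately show ?thesis by simp
  qed
  have small: "ennreal (R\<^sup>2 / wmeas w (ball x R)) * emeasure \<pi> (ball x R)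
      \<le> ennreal (C0 * C1 * 2 powr \<delta> * (R / \<rho> x) powr \<delta>)" if R: "0 < R" "R < \<rho> x" for x R
  proof -
    have "max R (\<rho> x / 2) < Sup (crit_set w M C1 x)"
      using R rho_pos[of x] unfolding rhoS[symmetric] by simp
    then obtain r' where r': "r' \<in> crit_set w M C1 x" "max R (\<rho> x / 2) < r'"
      using less_cSupD[of "crit_set w M C1 x"] rho_wd by blast
    have r'le: "r' \<le> \<rho> x" unfolding rhoS using rho_wd r'(1) by (intro cSup_upper) auto
    have r'c: "ennreal (r'\<^sup>2 / wmeas w (ball x r')) * emeasure \<pi> (ball x r') \<le> ennreal C1"
      using r'(1) unfolding crit by simp
    have Rr: "R < r'" using r'(2) by simp
    have r'pos: "r' > 0" using R Rr by simp
    have nnw: "0 \<le> r'\<^sup>2 / wmeas w (ball x r')" by (simp add: Wm_nonneg)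
    have f0: "0 \<le> C0 * (R / r') powr \<delta>" using C0 by simp
    have "ennreal (R\<^sup>2 / wmeas w (ball x R)) * emeasure \<pi> (ball x R)
        \<le> ennreal (C0 * (R / r') powr \<delta> * (r'\<^sup>2 / wmeas w (ball x r'))) * emeasure \<pi> (ball x r')"
      using M1 R(1) Rr by blast
    also have "\<dots> = ennreal (C0 * (R / r') powr \<delta>) * (ennreal (r'\<^sup>2 / wmeas w (ball x r')) * emeasure \<pi> (ball x r'))"
      by (subst ennreal_mult[OF f0 nnw]) (simp only: mult.assoc)
    also have "\<dots> \<le> ennreal (C0 * (R / r') powr \<delta>) * ennreal C1"
      by (rule mult_left_mono[OF r'c]) simp
    also have "\<dots> = ennreal (C0 * (R / r') powr \<delta> * C1)"
      using f0 C1 by (simp add: ennreal_mult)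
    also have "\<dots> \<le> ennreal (C0 * C1 * 2 powr \<delta> * (R / \<rho> x) powr \<delta>)"
    proof (rule ennreal_leI)
      have "R / r' \<le> R / (\<rho> x / 2)"
        using r'(2) R rho_pos[of x] by (intro divide_left_mono) auto
      also have "\<dots> = 2 * (R / \<rho> x)" by simp
      finally have "(R / r') powr \<delta> \<le> (2 * (R / \<rho> x)) powr \<delta>"
        using R r'pos \<delta> by (intro powr_mono2) auto
      also have "\<dots> = 2 powr \<delta> * (R / \<rho> x) powr \<delta>"
        using R rho_pos[of x] by (intro powr_mult)
      finally have "C0 * C1 * (R / r') powr \<delta> \<le> C0 * C1 * (2 powr \<delta> * (R / \<rho> x) powr \<delta>)"
        using C0 C1 by (intro mult_left_mono) auto
      then show "C0 * (R / r') powr \<delta> * C1 \<le> C0 * C1 * 2 powr \<delta> * (R / \<rho> x) powr \<delta>"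
        by (simp add: ac_simps)
    qed
    finally show ?thesis .
  qed
  have big: "ennreal (R\<^sup>2 / wmeas w (ball x R)) * emeasure \<pi> (ball x R) \<le> ennreal (C' * (R / \<rho> x) ^ N0)"
    if "\<rho> x \<le> R" for x R
    using N0 that by blast
  have partA: "\<exists>C>0. \<forall>x t. 0 < t \<longrightarrow> sqrt t \<le> a * \<rho> x \<longrightarrow>
            (\<integral>\<^sup>+ y. ennreal (1 / min (wmeas w (ball x (sqrt t))) (wmeas w (ball y (sqrt t)))
                        * exp (- (dist x y)\<^sup>2 / (c * t))) \<partial>\<pi>)
              \<le> ennreal (C / t * (sqrt t / \<rho> x) powr \<delta>)" if a: "a > 0" for a
  proof -
    define G where "G = C0 * C1 * 2 powr \<delta> + C' * a ^ N0"
    define p where "p = \<delta> + real N0"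
    define Ct where "Ct = (\<Sum>k. bterm K DIM('a) c p k)"
    have G: "G \<ge> 0" unfolding G_def using C0 C1 C' a by simp
    have Ct: "Ct \<ge> 0" unfolding Ct_def using K
      by (intro suminf_nonneg bterm_summable[OF c] bterm_nonneg) auto
    have "Ct * G + 1 > 0" using Ct G by (intro add_nonneg_pos mult_nonneg_nonneg) auto
    moreover have "\<forall>x t. 0 < t \<longrightarrow> sqrt t \<le> a * \<rho> x \<longrightarrow>
            (\<integral>\<^sup>+ y. ennreal (1 / min (wmeas w (ball x (sqrt t))) (wmeas w (ball y (sqrt t)))
                        * exp (- (dist x y)\<^sup>2 / (c * t))) \<partial>\<pi>)
              \<le> ennreal ((Ct * G + 1) / t * (sqrt t / \<rho> x) powr \<delta>)"
    proof (intro allI impI)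
      fix x t assume t: "0 < t" and ta: "sqrt t \<le> a * \<rho> x"
      have vals: "ennreal ((2 ^ k * sqrt t)\<^sup>2 / wmeas w (ball x (2 ^ k * sqrt t)))
                 * emeasure \<pi> (ball x (2 ^ k * sqrt t)) \<le> ennreal (G * 2 powr (real k * p) * (sqrt t / \<rho> x) powr \<delta>)" for k
        unfolding G_def p_def
        by (rule vals_a[where V = "\<lambda>R. ennreal (R\<^sup>2 / wmeas w (ball x R)) * emeasure \<pi> (ball x R)",
              OF rho_pos t a ta \<delta> C0 C1 C' small big])
      have "(\<integral>\<^sup>+ y. ennreal (1 / min (wmeas w (ball x (sqrt t))) (wmeas w (ball y (sqrt t)))
                        * exp (- (dist x y)\<^sup>2 / (c * t))) \<partial>\<pi>)
            \<le> ennreal (Ct * G / t * (sqrt t / \<rho> x) powr \<delta>)"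
        unfolding Ct_def by (rule core_integral[OF wA2 K dbl sp t c G _ vals]) simp
      also have "\<dots> \<le> ennreal ((Ct * G + 1) / t * (sqrt t / \<rho> x) powr \<delta>)"
        using t by (intro ennreal_leI mult_right_mono divide_right_mono) auto
      finally show "(\<integral>\<^sup>+ y. ennreal (1 / min (wmeas w (ball x (sqrt t))) (wmeas w (ball y (sqrt t)))
                        * exp (- (dist x y)\<^sup>2 / (c * t))) \<partial>\<pi>)
              \<le> ennreal ((Ct * G + 1) / t * (sqrt t / \<rho> x) powr \<delta>)" .
    qed
    ultimately show ?thesis by blast
  qed
  have partB: "\<exists>C>0. \<forall>x t. 0 < t \<longrightarrow> a * \<rho> x \<le> sqrt t \<longrightarrow>
            (\<integral>\<^sup>+ y. ennreal (1 / min (wmeas w (ball x (sqrt t))) (wmeas w (ball y (sqrt t)))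
                        * exp (- (dist x y)\<^sup>2 / (c * t))) \<partial>\<pi>)
              \<le> ennreal (C / t * (sqrt t / \<rho> x) ^ N0)" if a: "a > 0" for a
  proof -
    define G where "G = C' + C0 * C1 * 2 powr \<delta> / a ^ N0"
    define p where "p = real N0"
    define Ct where "Ct = (\<Sum>k. bterm K DIM('a) c p k)"
    have G: "G \<ge> 0" unfolding G_def using C0 C1 C' a by simp
    have Ct: "Ct \<ge> 0" unfolding Ct_def using K
      by (intro suminf_nonneg bterm_summable[OF c] bterm_nonneg) auto
    have "Ct * G + 1 > 0" using Ct G by (intro add_nonneg_pos mult_nonneg_nonneg) auto
    moreover have "\<forall>x t. 0 < t \<longrightarrow> a * \<rho> x \<le> sqrt t \<longrightarrow>
            (\<integral>\<^sup>+ y. ennreal (1 / min (wmeas w (ball x (sqrt t))) (wmeas w (ball y (sqrt t)))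
                        * exp (- (dist x y)\<^sup>2 / (c * t))) \<partial>\<pi>)
              \<le> ennreal ((Ct * G + 1) / t * (sqrt t / \<rho> x) ^ N0)"
    proof (intro allI impI)
      fix x t assume t: "0 < t" and ta: "a * \<rho> x \<le> sqrt t"
      have S: "0 \<le> (sqrt t / \<rho> x) ^ N0" using t rho_pos[of x] by simp
      have vals: "ennreal ((2 ^ k * sqrt t)\<^sup>2 / wmeas w (ball x (2 ^ k * sqrt t)))
                 * emeasure \<pi> (ball x (2 ^ k * sqrt t)) \<le> ennreal (G * 2 powr (real k * p) * (sqrt t / \<rho> x) ^ N0)" for k
        unfolding G_def p_def
        by (rule vals_b[where V = "\<lambda>R. ennreal (R\<^sup>2 / wmeas w (ball x R)) * emeasure \<pi> (ball x R)",
              OF rho_pos t a ta \<delta> C0 C1 C' small big])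
      have "(\<integral>\<^sup>+ y. ennreal (1 / min (wmeas w (ball x (sqrt t))) (wmeas w (ball y (sqrt t)))
                        * exp (- (dist x y)\<^sup>2 / (c * t))) \<partial>\<pi>)
            \<le> ennreal (Ct * G / t * (sqrt t / \<rho> x) ^ N0)"
        unfolding Ct_def by (rule core_integral[OF wA2 K dbl sp t c G S vals])
      also have "\<dots> \<le> ennreal ((Ct * G + 1) / t * (sqrt t / \<rho> x) ^ N0)"
        using t S by (intro ennreal_leI mult_right_mono divide_right_mono) auto
      finally show "(\<integral>\<^sup>+ y. ennreal (1 / min (wmeas w (ball x (sqrt t))) (wmeas w (ball y (sqrt t)))
                        * exp (- (dist x y)\<^sup>2 / (c * t))) \<partial>\<pi>)
              \<le> ennreal ((Ct * G + 1) / t * (sqrt t / \<rho> x) ^ N0)" .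
    qed
    ultimately show ?thesis by blast
  qed
  show ?thesis using partA partB by blast
qed

end
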